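(* In the uKP setting described in the context, fix the integer $s$ and integers $l,m,n$. Then \[ \tau(l+1,m,n)=\max_{0\le k_1\le N}\bigl(\tau_c(N-k_1,N+1)-k_1a_1\bigr). \]
   Context: Ultradiscrete permanent (UP): for a real $N\times N$ matrix $A=(a_{ij})$, $\max A\equiv\max_{\pi}\sum_{i=1}^N a_{i\pi(i)}$ over all permutations $\pi$ of $\{1,\dots,N\}$; $\max[\bm{b}_1\ \dots\ \bm{b}_N]$ is the UP of the matrix with columns $\bm{b}_j$. uKP setting: $N\ge1$; real parameters $a_1>a_2>a_3$ and arbitrary real $p_i,c_i,c'_i$ ($1\le i\le N$); for integers $l,m,n,s$, $\eta_i(l,m,n,s)=p_is+\max(0,p_i-a_1)l+\max(0,p_i-a_2)m+\max(0,p_i-a_3)n+c_i$, $\eta'_i(l,m,n,s)=-p_is+\max(0,-p_i-a_1)l+\max(0,-p_i-a_2)m+\max(0,-p_i-a_3)n+c'_i$, $\phi_i(l,m,n,s)=\max(\eta_i,\eta'_i)$, and $\tau(l,m,n)=\max[\phi_i(l,m,n,s+j-1)]_{1\le i,j\le N}$ ($s$ an auxiliary fixed integer). With $l,m,n,s$ fixed, put $\bm{\phi}(j)=(\phi_i(l,m,n,s+j))_{1\le i\le N}$, and for $0\le\alpha<\beta\le N+1$ let $\tau_c(\alpha,\beta)=\max[\bm{\phi}(0)\ \dots\ \widehat{\bm{\phi}(\alpha)}\ \dots\ \widehat{\bm{\phi}(\beta)}\ \dots\ \bm{\phi}(N+1)]$, the UP of the $N$ columns $\bm{\phi}(j)$,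 $j\in\{0,\dots,N+1\}\setminus\{\alpha,\beta\}$. *)

theory Defs
  imports Complex_Main "HOL-Combinatorics.Permutations"
begin

definition upmax :: "nat \<Rightarrow> (nat \<Rightarrow> nat \<Rightarrow> real) \<Rightarrow> real" where
  "upmax N A = Max ((\<lambda>\<pi>. \<Sum>i<N. A i (\<pi> i)) ` {\<pi>. \<pi> permutes {..<N}})"

definition ueta :: "real \<Rightarrow> real \<Rightarrow> real \<Rightarrow> real \<Rightarrow> real \<Rightarrow> int \<Rightarrow> int \<Rightarrow> int \<Rightarrow> int \<Rightarrow> real" where
  "ueta a1 a2 a3 p c l m n s =
     p * of_int s + max 0 (p - a1) * of_int l + max 0 (p - a2) * of_int m
     + max 0 (p - a3) * of_int n + c"

definition uphi :: "real \<Rightarrow> real \<Rightarrow> real \<Rightarrow> real \<Rightarrow> real \<Rightarrow> real \<Rightarrow> int \<Rightarrow> int \<Rightarrow> int \<Rightarrow> int \<Rightarrow> real" where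
  "uphi a1 a2 a3 p c c' l m n s = max (ueta a1 a2 a3 p c l m n s) (ueta a1 a2 a3 (- p) c' l m n s)"

text \<open>tau(l,m,n) = max[phi_i(l,m,n,s+j-1)]_{1<=i,j<=N}; here 0-indexed rows i and columns j.\<close>
definition utau :: "nat \<Rightarrow> real \<Rightarrow> real \<Rightarrow> real \<Rightarrow> (nat \<Rightarrow> real) \<Rightarrow> (nat \<Rightarrow> real) \<Rightarrow> (nat \<Rightarrow> real)
      \<Rightarrow> int \<Rightarrow> int \<Rightarrow> int \<Rightarrow> int \<Rightarrow> real" where
  "utau N a1 a2 a3 p c c' s l m n =
     upmax N (\<lambda>i j. uphi a1 a2 a3 (p i) (c i) (c' i) l m n (s + int j))"

text \<open>tau_c(alpha,beta): UP of the columns phi(j) = (phi_i(l,m,n,s+j))_i,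
  j in {0..N+1} - {alpha,beta}, taken in increasing order of j.\<close>
definition utauc :: "nat \<Rightarrow> real \<Rightarrow> real \<Rightarrow> real \<Rightarrow> (nat \<Rightarrow> real) \<Rightarrow> (nat \<Rightarrow> real) \<Rightarrow> (nat \<Rightarrow> real)
      \<Rightarrow> int \<Rightarrow> int \<Rightarrow> int \<Rightarrow> int \<Rightarrow> nat \<Rightarrow> nat \<Rightarrow> real" where
  "utauc N a1 a2 a3 p c c' l m n s \<alpha> \<beta> =
     upmax N (\<lambda>i j. uphi a1 a2 a3 (p i) (c i) (c' i) l m n
        (s + int (sorted_list_of_set ({0..N+1} - {\<alpha>, \<beta>}) ! j)))"

end

theory Submission
  imports Defs
begin
definition tm :: "nat \<Rightarrow> (nat \<Rightarrow> nat \<Rightarrow> real) \<Rightarrow> real \<Rightarrow> (nat \<Rightarrow> nat) \<Rightarrow> (nat \<Rightarrow> bool) \<Rightarrow> real" where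
  "tm N F a \<pi> e = (\<Sum>i<N. if e (\<pi> i) then F i (\<pi> i + 1) - a else F i (\<pi> i))"

definition mu :: "nat \<Rightarrow> (nat \<Rightarrow> bool) \<Rightarrow> nat" where
  "mu N e = (\<Sum>c<N. if e c then N - c else 0)"

lemma sum_two:
  assumes "finite A" "r \<in> A" "r' \<in> A" "r \<noteq> r'"
  shows "sum f A = f r + f r' + sum f (A - {r, r'})"
proof -
  have "sum f A = f r + sum f (A - {r})" using assms by (simp add: sum.remove)
  also have "sum f (A - {r}) = f r' + sum f (A - {r} - {r'})"
    using assms by (intro sum.remove) auto
  also have "A - {r} - {r'} = A - {r, r'}" by auto
  finally show ?thesis by (simp add: add.assoc)
qed

lemma swap_step:
  assumes conv: "\<And>i x. 2 * F i (x+1) \<le> F i x + F i (x+2)"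
    and pi: "\<pi> permutes {..<N}" and j: "j+1 < N" "e j" "\<not> e (j+1)"
  shows "\<exists>\<pi>'. \<pi>' permutes {..<N} \<and> tm N F a \<pi> e \<le> tm N F a \<pi>' (e(j:=False, j+1:=True))"
proof -
  define r where "r = inv \<pi> j"
  define r' where "r' = inv \<pi> (j+1)"
  have pr: "\<pi> r = j" "\<pi> r' = j+1" unfolding r_def r'_def using permutes_inverses[OF pi] by auto
  have rN: "r < N" "r' < N" using pr permutes_in_image[OF pi, of r] permutes_in_image[OF pi, of r'] j by auto
  have rr: "r \<noteq> r'" using pr by auto
  let ?e' = "e(j:=False, j+1:=True)"
  let ?f = "\<lambda>\<sigma> e i. if e (\<sigma> i) then F i (\<sigma> i + 1) - a else F i (\<sigma> i)"
  have oth: "\<And>i. i \<in> {..<N} - {r, r'} \<Longrightarrow> \<pi> i \<noteq> j \<and> \<pi> i \<noteq> j+1"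
  proof -
    fix i assume "i \<in> {..<N} - {r, r'}"
    then have "i \<noteq> r" "i \<noteq> r'" by auto
    then have "\<pi> i \<noteq> \<pi> r" "\<pi> i \<noteq> \<pi> r'" using permutes_inj[OF pi] by (auto dest: injD)
    then show "\<pi> i \<noteq> j \<and> \<pi> i \<noteq> j+1" using pr by auto
  qed
  have T: "sum (?f \<pi> e) ({..<N} - {r,r'}) = sum (?f \<pi> ?e') ({..<N} - {r,r'})"
    by (rule sum.cong) (use oth in auto)
  have e0: "tm N F a \<pi> e = F r (j+1) - a + F r' (j+1) + sum (?f \<pi> e) ({..<N} - {r,r'})"
    unfolding tm_def using sum_two[of "{..<N}" r r' "?f \<pi> e"] rN rr pr j by simp
  have conv1: "2 * F r (j+1) \<le> F r j + F r (j+2)" "2 * F r' (j+1) \<le> F r' j + F r' (j+2)"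
    using conv[of r j] conv[of r' j] by auto
  show ?thesis
  proof (cases "F r (j+1) + F r' (j+1) \<le> F r j + F r' (j+2)")
    case True
    have "tm N F a \<pi> ?e' = F r j + (F r' (j+2) - a) + sum (?f \<pi> ?e') ({..<N} - {r,r'})"
      unfolding tm_def using sum_two[of "{..<N}" r r' "?f \<pi> ?e'"] rN rr pr j
      by (simp add: numeral_2_eq_2)
    then show ?thesis using True e0 T pi by (intro exI[of _ \<pi>]) auto
  next
    case False
    define \<sigma> where "\<sigma> = \<pi> \<circ> transpose r r'"
    have sp: "\<sigma> permutes {..<N}" unfolding \<sigma>_def
      by (rule permutes_compose[OF permutes_swap_id pi]) (use rN in auto)
    have sr: "\<sigma> r = j+1" "\<sigma> r' = j" using pr by (auto simp: \<sigma>_def)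
    have T2: "sum (?f \<sigma> ?e') ({..<N} - {r,r'}) = sum (?f \<pi> ?e') ({..<N} - {r,r'})"
      by (rule sum.cong) (auto simp: \<sigma>_def transpose_def)
    have "tm N F a \<sigma> ?e' = (F r (j+2) - a) + F r' j + sum (?f \<sigma> ?e') ({..<N} - {r,r'})"
      unfolding tm_def using sum_two[of "{..<N}" r r' "?f \<sigma> ?e'"] rN rr sr j
      by (simp add: numeral_2_eq_2)
    then show ?thesis using False e0 T T2 sp conv1 by (intro exI[of _ \<sigma>]) auto
  qed
qed

lemma upclosed_interval:
  "S \<subseteq> {..<N} \<Longrightarrow> (\<And>c c'. c \<in> S \<Longrightarrow> c \<le> c' \<Longrightarrow> c' < N \<Longrightarrow> c' \<in> S)
   \<Longrightarrow> S = {N - card S..<N}"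
proof (induction N arbitrary: S)
  case 0 then show ?case by auto
next
  case (Suc N)
  show ?case
  proof (cases "N \<in> S")
    case False
    have "S = {}"
    proof (rule ccontr)
      assume "S \<noteq> {}"
      then obtain c where "c \<in> S" by blast
      then have "c \<le> N" using Suc.prems(1) by auto
      then have "N \<in> S" using Suc.prems(2)[OF \<open>c \<in> S\<close>] by simp
      then show False using False by simp
    qed
    then show ?thesis by simp
  next
    case True
    define S' where "S' = S - {N}"
    have S'1: "S' \<subseteq> {..<N}" using Suc.prems(1) unfolding S'_def by (auto simp: less_Suc_eq)
    have S'2: "\<And>c c'. c \<in> S' \<Longrightarrow> c \<le> c' \<Longrightarrow> c' < N \<Longrightarrow> c' \<in> S'"
      using Suc.prems(2) unfolding S'_def by auto
    have IH: "S' = {N - card S'..<N}" using Suc.IH[OF S'1 S'2] .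
    have fin: "finite S'" using S'1 finite_subset by blast
    have cS: "card S = Suc (card S')" using True fin unfolding S'_def
      by (metis card_Suc_Diff1 finite_Diff2 finite_insert insert_Diff)
    have le: "card S' \<le> N" using card_mono[OF _ S'1] by simp
    have "S = insert N S'" using True unfolding S'_def by auto
    also have "\<dots> = insert N {N - card S'..<N}" using arg_cong[OF IH, of "insert N"] .
    also have "\<dots> = {N - card S'..<Suc N}" by auto
    also have "N - card S' = Suc N - card S" using cS le by simp
    finally show ?thesis .
  qed
qed

lemma mu_swap:
  assumes "j+1 < N" "e j" "\<not> e (j+1)"
  shows "mu N (e(j:=False, j+1:=True)) < mu N e"
proof -
  let ?e' = "e(j:=False, j+1:=True)"
  let ?g = "\<lambda>e c. if e c then N - c else 0"
  have T: "sum (?g e) ({..<N} - {j,j+1}) = sum (?g ?e') ({..<N} - {j,j+1})"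
    by (rule sum.cong) auto
  have "mu N e = (N - j) + 0 + sum (?g e) ({..<N} - {j,j+1})"
    unfolding mu_def using sum_two[of "{..<N}" j "j+1" "?g e"] assms by simp
  moreover have "mu N ?e' = 0 + (N - (j+1)) + sum (?g ?e') ({..<N} - {j,j+1})"
    unfolding mu_def using sum_two[of "{..<N}" j "j+1" "?g ?e'"] assms by simp
  ultimately show ?thesis using T assms by simp
qed

lemma sort_pattern:
  assumes conv: "\<And>i x. 2 * F i (x+1) \<le> F i x + F i (x+2)"
  shows "\<pi> permutes {..<N} \<Longrightarrow> \<exists>k\<le>N. \<exists>\<pi>'. \<pi>' permutes {..<N} \<and> tm N F a \<pi> e \<le> tm N F a \<pi>' (\<lambda>c. N - k \<le> c)"
proof (induction e arbitrary: \<pi> rule: measure_induct_rule[where f="mu N"])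
  case (less e)
  show ?case
  proof (cases "\<exists>j. j+1 < N \<and> e j \<and> \<not> e (j+1)")
    case True
    then obtain j where j: "j+1 < N" "e j" "\<not> e (j+1)" by blast
    obtain \<pi>' where p': "\<pi>' permutes {..<N}" "tm N F a \<pi> e \<le> tm N F a \<pi>' (e(j:=False, j+1:=True))"
      using swap_step[where F=F, OF conv less.prems j] by blast
    obtain k \<pi>'' where "k \<le> N" "\<pi>'' permutes {..<N}"
      "tm N F a \<pi>' (e(j:=False, j+1:=True)) \<le> tm N F a \<pi>'' (\<lambda>c. N - k \<le> c)"
      using less.IH[OF mu_swap[OF j] p'(1)] by blast
    then show ?thesis using p' by (intro exI[of _ k]) auto
  next
    case False
    define S where "S = {c. c < N \<and> e c}"
    have up: "\<And>c c'. c \<in> S \<Longrightarrow> c \<le> c' \<Longrightarrow> c' < N \<Longrightarrow> c' \<in> S"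
    proof -
      fix c c' assume "c \<in> S" "c \<le> c'" "c' < N"
      then have ec: "e c" by (auto simp: S_def)
      have "\<forall>d. c + d < N \<longrightarrow> e (c + d)"
      proof
        fix d show "c + d < N \<longrightarrow> e (c + d)"
          by (induction d) (use ec False in auto)
      qed
      then show "c' \<in> S" using \<open>c \<le> c'\<close> \<open>c' < N\<close>
        by (auto simp: S_def) (metis le_add_diff_inverse)
    qed
    have Seq0: "S = {N - card S..<N}" by (rule upclosed_interval) (use up in \<open>auto simp: S_def\<close>)
    define k where "k = card S"
    have Seq: "S = {N - k..<N}" using Seq0 unfolding k_def .
    have cle: "k \<le> N" unfolding k_def using card_mono[of "{..<N}" S] by (auto simp: S_def)
    have "tm N F a \<pi> e = tm N F a \<pi> (\<lambda>c. N - k \<le> c)"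
      unfolding tm_def
    proof (rule sum.cong)
      fix i assume "i \<in> {..<N}"
      then have "\<pi> i < N" using permutes_in_image[OF less.prems] by auto
      then have "e (\<pi> i) = (N - k \<le> \<pi> i)" using Seq by (auto simp: S_def set_eq_iff)
      then show "(if e (\<pi> i) then F i (\<pi> i + 1) - a else F i (\<pi> i)) =
          (if N - k \<le> \<pi> i then F i (\<pi> i + 1) - a else F i (\<pi> i))" by simp
    qed simp
    then show ?thesis using cle less.prems by (intro exI[of _ k]) auto
  qed
qed


lemma uphi_succ:
  "uphi a1 a2 a3 p c c' (l+1) m n s = max (uphi a1 a2 a3 p c c' l m n (s+1) - a1) (uphi a1 a2 a3 p c c' l m n s)"
proof -
  have e1: "ueta a1 a2 a3 p c (l+1) m n s = max (ueta a1 a2 a3 p c l m n (s+1) - a1) (ueta a1 a2 a3 p c l m n s)"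
    for p c unfolding ueta_def by (simp add: algebra_simps max_def)
  show ?thesis unfolding uphi_def e1 by (simp add: max_def)
qed

lemma uphi_conv:
  "2 * uphi a1 a2 a3 p c c' l m n (s+1) \<le> uphi a1 a2 a3 p c c' l m n s + uphi a1 a2 a3 p c c' l m n (s+2)"
proof -
  have lin: "ueta a1 a2 a3 p c l m n (s+t) = ueta a1 a2 a3 p c l m n s + p * of_int t" for p c t
    unfolding ueta_def by (simp add: algebra_simps)
  have "ueta a1 a2 a3 p c l m n (s+1) * 2 = ueta a1 a2 a3 p c l m n s + ueta a1 a2 a3 p c l m n (s+2)"
    "ueta a1 a2 a3 (-p) c' l m n (s+1) * 2 = ueta a1 a2 a3 (-p) c' l m n s + ueta a1 a2 a3 (-p) c' l m n (s+2)"
    using lin[of p c 1] lin[of p c 2] lin[of "-p" c' 1] lin[of "-p" c' 2] by simp_all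
  then show ?thesis unfolding uphi_def by (simp add: max_def)
qed

lemma perms_fin: "finite {\<pi>. \<pi> permutes {..<(N::nat)}}"
  by (rule finite_permutations) simp

lemma perms_ne: "{\<pi>. \<pi> permutes {..<(N::nat)}} \<noteq> {}"
  using permutes_id by blast

lemma upmax_ge: "\<pi> permutes {..<N} \<Longrightarrow> (\<Sum>i<N. A i (\<pi> i)) \<le> upmax N A"
  unfolding upmax_def by (rule Max_ge) (use perms_fin in auto)

lemma upmax_obtain: "\<exists>\<pi>. \<pi> permutes {..<N} \<and> upmax N A = (\<Sum>i<N. A i (\<pi> i))"
proof -
  have "upmax N A \<in> (\<lambda>\<pi>. \<Sum>i<N. A i (\<pi> i)) ` {\<pi>. \<pi> permutes {..<N}}"
    unfolding upmax_def by (rule Max_in) (use perms_fin perms_ne in auto)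
  then show ?thesis by auto
qed

lemma upmax_cong:
  assumes "\<And>i j. i < N \<Longrightarrow> j < N \<Longrightarrow> A i j = B i j"
  shows "upmax N A = upmax N B"
proof -
  have "(\<lambda>\<pi>. \<Sum>i<N. A i (\<pi> i)) ` {\<pi>. \<pi> permutes {..<N}} = (\<lambda>\<pi>. \<Sum>i<N. B i (\<pi> i)) ` {\<pi>. \<pi> permutes {..<N}}"
  proof (rule image_cong[OF refl])
    fix \<pi> assume "\<pi> \<in> {\<pi>. \<pi> permutes {..<N}}"
    then have pi: "\<pi> permutes {..<N}" by simp
    show "(\<Sum>i<N. A i (\<pi> i)) = (\<Sum>i<N. B i (\<pi> i))"
      by (rule sum.cong[OF refl]) (use assms permutes_in_image[OF pi] in auto)
  qed
  then show ?thesis unfolding upmax_def by simp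
qed

definition H :: "nat \<Rightarrow> nat \<Rightarrow> nat \<Rightarrow> nat" where
  "H N k j = (if j < N - k then j else j + 1)"

lemma sorted_H:
  assumes "k \<le> N"
  shows "sorted_list_of_set ({0..N+1} - {N - k, N + 1}) = map (H N k) [0..<N]"
proof -
  have set: "set (map (H N k) [0..<N]) = {0..N+1} - {N - k, N + 1}"
  proof
    show "set (map (H N k) [0..<N]) \<subseteq> {0..N+1} - {N - k, N + 1}"
      using assms by (auto simp: H_def)
    show "{0..N+1} - {N - k, N + 1} \<subseteq> set (map (H N k) [0..<N])"
    proof
      fix x assume x: "x \<in> {0..N+1} - {N - k, N + 1}"
      show "x \<in> set (map (H N k) [0..<N])"
      proof (cases "x < N - k")
        case True
        then have "H N k x = x" "x < N" by (auto simp: H_def)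
        then show ?thesis by (metis atLeastLessThan_iff image_eqI le0 set_map set_upt)
      next
        case False
        have x1: "N - k < x" "x \<le> N+1" "x \<noteq> N+1" using x False by auto
        then have "H N k (x - 1) = x" "x - 1 < N" unfolding H_def by auto
        then show ?thesis by (metis atLeastLessThan_iff image_eqI le0 set_map set_upt)
      qed
    qed
  qed
  have mono: "mono (H N k)" unfolding mono_def H_def by auto
  have sorted: "sorted (map (H N k) [0..<N])"
    by (rule sorted_map_mono) (use mono in \<open>auto simp: mono_on_def mono_def\<close>)
  have inj: "inj (H N k)" unfolding inj_def H_def by auto
  have dist: "distinct (map (H N k) [0..<N])"
    by (simp add: distinct_map inj_on_subset[OF inj])
  have "sorted_list_of_set ({0..N+1} - {N - k, N + 1}) = sorted_list_of_set (set (map (H N k) [0..<N]))"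
    using set by simp
  also have "\<dots> = map (H N k) [0..<N]"
    by (subst sorted_list_of_set_sort_remdups) (simp only: distinct_remdups_id[OF dist] sorted_sort_id[OF sorted])
  finally show ?thesis .
qed


lemma tm_Hk:
  assumes pi: "\<pi> permutes {..<N}" and k: "k \<le> N"
  shows "tm N F a \<pi> (\<lambda>c. N - k \<le> c) = (\<Sum>i<N. F i (H N k (\<pi> i))) - real k * a"
proof -
  have "tm N F a \<pi> (\<lambda>c. N - k \<le> c) = (\<Sum>i<N. F i (H N k (\<pi> i)) - (\<lambda>c. if N - k \<le> c then a else 0) (\<pi> i))"
    unfolding tm_def by (rule sum.cong) (auto simp: H_def)
  also have "\<dots> = (\<Sum>i<N. F i (H N k (\<pi> i))) - (\<Sum>i<N. (\<lambda>c. if N - k \<le> c then a else 0) (\<pi> i))"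
    by (rule sum_subtractf)
  also have "(\<Sum>i<N. (\<lambda>c. if N - k \<le> c then a else 0) (\<pi> i)) = (\<Sum>c<N. if N - k \<le> c then a else 0)"
    by (rule sum.reindex_bij_betw[OF permutes_imp_bij[OF pi]])
  also have "\<dots> = (\<Sum>c\<in>{c\<in>{..<N}. N - k \<le> c}. a)"
    by (subst sum.inter_filter) auto
  also have "{c\<in>{..<N}. N - k \<le> c} = {N-k..<N}" by auto
  also have "(\<Sum>c\<in>{N-k..<N}. a) = real k * a" using k by simp
  finally show ?thesis .
qed

lemma tm_le_max:
  "tm N F a \<pi> e \<le> (\<Sum>i<N. max (F i (\<pi> i + 1) - a) (F i (\<pi> i)))"
  unfolding tm_def by (rule sum_mono) auto

lemma max_eq_tm:
  assumes pi: "\<pi> permutes {..<N}"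
  shows "\<exists>e. (\<Sum>i<N. max (F i (\<pi> i + 1) - a) (F i (\<pi> i))) = tm N F a \<pi> e"
proof
  let ?e = "\<lambda>c. F (inv \<pi> c) (c+1) - a \<ge> F (inv \<pi> c) c"
  show "(\<Sum>i<N. max (F i (\<pi> i + 1) - a) (F i (\<pi> i))) = tm N F a \<pi> ?e"
    unfolding tm_def by (rule sum.cong) (auto simp: permutes_inverses[OF pi] max_def)
qed

theorem lemma6:
  fixes N :: nat and a1 a2 a3 :: real and p c c' :: "nat \<Rightarrow> real" and l m n s :: int
  assumes "N \<ge> 1" and "a1 > a2" and "a2 > a3"
  shows "utau N a1 a2 a3 p c c' s (l + 1) m n =
         Max ((\<lambda>k1. utauc N a1 a2 a3 p c c' l m n s (N - k1) (N + 1) - real k1 * a1) ` {0..N})"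
proof -
  define F where "F i x = uphi a1 a2 a3 (p i) (c i) (c' i) l m n (s + int x)" for i x
  have conv: "2 * F i (x+1) \<le> F i x + F i (x+2)" for i x
    using uphi_conv[of a1 a2 a3 "p i" "c i" "c' i" l m n "s + int x"] unfolding F_def
    by (simp add: ac_simps)
  have L: "utau N a1 a2 a3 p c c' s (l + 1) m n = upmax N (\<lambda>i j. max (F i (j+1) - a1) (F i j))"
    unfolding utau_def F_def uphi_succ by (simp add: ac_simps)
  have R: "utauc N a1 a2 a3 p c c' l m n s (N - k) (N + 1) = upmax N (\<lambda>i j. F i (H N k j))"
    if "k \<le> N" for k
    unfolding utauc_def sorted_H[OF that] F_def by (rule upmax_cong) simp
  define f where "f k1 = utauc N a1 a2 a3 p c c' l m n s (N - k1) (N + 1) - real k1 * a1" for k1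
  have fin: "finite (f ` {0..N})" "f ` {0..N} \<noteq> {}" by auto
  show ?thesis unfolding f_def[symmetric]
  proof (rule antisym)
    obtain \<pi> where pi: "\<pi> permutes {..<N}"
      and eq: "upmax N (\<lambda>i j. max (F i (j+1) - a1) (F i j)) = (\<Sum>i<N. max (F i (\<pi> i + 1) - a1) (F i (\<pi> i)))"
      using upmax_obtain by blast
    obtain e where e: "(\<Sum>i<N. max (F i (\<pi> i + 1) - a1) (F i (\<pi> i))) = tm N F a1 \<pi> e"
      using max_eq_tm[OF pi] by blast
    obtain k \<pi>' where k: "k \<le> N" and pi': "\<pi>' permutes {..<N}"
      and le: "tm N F a1 \<pi> e \<le> tm N F a1 \<pi>' (\<lambda>c. N - k \<le> c)"
      using sort_pattern[where F=F, OF conv pi] by blast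
    have "tm N F a1 \<pi>' (\<lambda>c. N - k \<le> c) = (\<Sum>i<N. F i (H N k (\<pi>' i))) - real k * a1"
      by (rule tm_Hk[OF pi' k])
    also have "\<dots> \<le> upmax N (\<lambda>i j. F i (H N k j)) - real k * a1"
      using upmax_ge[OF pi', of "\<lambda>i j. F i (H N k j)"] by simp
    also have "\<dots> = f k" unfolding f_def R[OF k] ..
    also have "\<dots> \<le> Max (f ` {0..N})" by (rule Max_ge) (use k in auto)
    finally show "utau N a1 a2 a3 p c c' s (l + 1) m n \<le> Max (f ` {0..N})"
      unfolding L eq e using le by simp
  next
    have "Max (f ` {0..N}) \<in> f ` {0..N}" by (rule Max_in[OF fin])
    then obtain k where k0: "k \<in> {0..N}" and mk: "Max (f ` {0..N}) = f k" by (rule imageE) 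
    have k: "k \<le> N" using k0 by simp
    obtain \<pi> where pi: "\<pi> permutes {..<N}"
      and eq: "upmax N (\<lambda>i j. F i (H N k j)) = (\<Sum>i<N. F i (H N k (\<pi> i)))"
      using upmax_obtain by blast
    have "f k = tm N F a1 \<pi> (\<lambda>c. N - k \<le> c)"
      unfolding f_def R[OF k] eq tm_Hk[OF pi k] ..
    also have "\<dots> \<le> (\<Sum>i<N. max (F i (\<pi> i + 1) - a1) (F i (\<pi> i)))" by (rule tm_le_max)
    also have "\<dots> \<le> upmax N (\<lambda>i j. max (F i (j+1) - a1) (F i j))"
      using upmax_ge[OF pi, of "\<lambda>i j. max (F i (j+1) - a1) (F i j)"] by simp
    finally show "Max (f ` {0..N}) \<le> utau N a1 a2 a3 p c c' s (l + 1) m n"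
      unfolding mk L .
  qed
qed

end
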